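(* Let $R$ be a commutative ring. (i) If $R$ is a GPF-ring, then $R$ is a quasi p.f. ring. (ii) If $R$ is a quasi p.f. ring, then $R$ is an mp-ring.
   Context: $R$ is a GPF-ring if for each $f\in R$ there is $n\geq 1$ with $Rf^n$ a flat $R$-module. An ideal $I$ is quasi-pure if for each $f\in I$ there is $g\in I$ with $f(1-g)$ nilpotent; $R$ is a quasi p.f. ring if $\operatorname{Ann}(f)$ is quasi-pure for every $f\in R$. $R$ is an mp-ring if every prime ideal of $R$ contains a unique minimal prime ideal (equivalently $\mathfrak p+\mathfrak q=R$ for distinct minimal primes $\mathfrak p,\mathfrak q$). *)

theory Defs
  imports Main
begin

definition is_ideal :: "'a::comm_ring_1 set \<Rightarrow> bool" where
  "is_ideal I \<longleftrightarrow> 0 \<in> I \<and> (\<forall>x\<in>I. \<forall>y\<in>I. x + y \<in> I) \<and> (\<forall>r. \<forall>x\<in>I. r * x \<in> I)"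

definition prime_ideal :: "'a::comm_ring_1 set \<Rightarrow> bool" where
  "prime_ideal P \<longleftrightarrow> is_ideal P \<and> P \<noteq> UNIV \<and> (\<forall>a b. a * b \<in> P \<longrightarrow> a \<in> P \<or> b \<in> P)"

definition minimal_prime :: "'a::comm_ring_1 set \<Rightarrow> bool" where
  "minimal_prime P \<longleftrightarrow> prime_ideal P \<and> (\<forall>Q. prime_ideal Q \<and> Q \<subseteq> P \<longrightarrow> Q = P)"

definition nilpotent :: "'a::comm_ring_1 \<Rightarrow> bool" where
  "nilpotent x \<longleftrightarrow> (\<exists>n. x ^ n = 0)"

definition Ann :: "'a::comm_ring_1 \<Rightarrow> 'a set" where
  "Ann f = {r. r * f = 0}"

definition principal :: "'a::comm_ring_1 \<Rightarrow> 'a set" where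
  "principal a = {r * a | r. True}"

text \<open>Flatness of a submodule M of R (viewed as R-module), via the equational
  criterion of flatness: every relation sum r_i x_i = 0 with x_i in M is trivial.\<close>
definition flat_submodule :: "'a::comm_ring_1 set \<Rightarrow> bool" where
  "flat_submodule M \<longleftrightarrow>
     (\<forall>(k::nat) (r::nat \<Rightarrow> 'a) x.
        (\<forall>i<k. x i \<in> M) \<and> (\<Sum>i<k. r i * x i) = 0 \<longrightarrow>
        (\<exists>(m::nat) (y::nat \<Rightarrow> 'a) (a::nat \<Rightarrow> nat \<Rightarrow> 'a).
           (\<forall>j<m. y j \<in> M) \<and>
           (\<forall>i<k. x i = (\<Sum>j<m. a i j * y j)) \<and>
           (\<forall>j<m. (\<Sum>i<k. r i * a i j) = 0)))"

definition GPF_ring :: "'a::comm_ring_1 itself \<Rightarrow> bool" where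
  "GPF_ring _ \<longleftrightarrow> (\<forall>f::'a. \<exists>n\<ge>1. flat_submodule (principal (f ^ n)))"

definition quasi_pure :: "'a::comm_ring_1 set \<Rightarrow> bool" where
  "quasi_pure I \<longleftrightarrow> (\<forall>f\<in>I. \<exists>g\<in>I. nilpotent (f * (1 - g)))"

definition quasi_pf_ring :: "'a::comm_ring_1 itself \<Rightarrow> bool" where
  "quasi_pf_ring _ \<longleftrightarrow> (\<forall>f::'a. quasi_pure (Ann f))"

definition mp_ring :: "'a::comm_ring_1 itself \<Rightarrow> bool" where
  "mp_ring _ \<longleftrightarrow> (\<forall>P::'a set. prime_ideal P \<longrightarrow> (\<exists>!Q. minimal_prime Q \<and> Q \<subseteq> P))"

end

theory Submission
  imports Defs
begin

lemma part1:
  assumes G: "GPF_ring TYPE('a::comm_ring_1)"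
  shows "quasi_pf_ring TYPE('a)"
  unfolding quasi_pf_ring_def quasi_pure_def
proof (intro allI ballI)
  fix f h :: 'a
  assume "h \<in> Ann f"
  hence hf: "h * f = 0" by (simp add: Ann_def)
  from G obtain m where m1: "m \<ge> 1" and fl: "flat_submodule (principal (h ^ m))"
    unfolding GPF_ring_def by blast
  have hm: "h ^ m \<in> principal (h ^ m)" unfolding principal_def by (metis (mono_tags, lifting) mem_Collect_eq mult_1)
  obtain m0 where m0: "m = Suc m0" using m1 by (cases m) auto
  have rel: "(\<Sum>i<(1::nat). f * h ^ m) = 0"
    using hf by (simp add: m0 mult.assoc[symmetric] mult.commute)
  have "\<exists>(m'::nat) (y::nat \<Rightarrow> 'a) (a::nat \<Rightarrow> nat \<Rightarrow> 'a). (\<forall>j<m'. y j \<in> principal (h ^ m)) \<and> (\<forall>i<(1::nat). h ^ m = (\<Sum>j<m'. a i j * y j))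
     \<and> (\<forall>j<m'. (\<Sum>i<(1::nat). f * a i j) = 0)"
  proof -
    have pre: "(\<forall>i<(1::nat). h ^ m \<in> principal (h ^ m)) \<and> (\<Sum>i<(1::nat). f * h ^ m) = 0"
      using hm rel by simp
    show ?thesis
      using fl unfolding flat_submodule_def
      apply (drule_tac x=1 in spec)
      apply (drule_tac x="\<lambda>_. f" in spec)
      apply (drule_tac x="\<lambda>_. h ^ m" in spec)
      using pre by simp
  qed
  then obtain m' :: nat and y :: "nat \<Rightarrow> 'a" and a :: "nat \<Rightarrow> nat \<Rightarrow> 'a" where yM: "\<forall>j<m'. y j \<in> principal (h ^ m)"
    and xe0: "\<forall>i<(1::nat). h ^ m = (\<Sum>j<m'. a i j * y j)"
    and ae0: "\<forall>j<m'. (\<Sum>i<(1::nat). f * a i j) = 0"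
    by blast
  have xe: "h ^ m = (\<Sum>j<m'. a 0 j * y j)" using xe0 by simp
  have ae: "\<forall>j<m'. f * a 0 j = 0" using ae0 by simp
  have "\<forall>j<m'. \<exists>s. y j = s * h ^ m" using yM unfolding principal_def by blast
  then obtain s where s: "\<forall>j<m'. y j = s j * h ^ m" by metis
  define c where "c = (\<Sum>j<m'. a 0 j * s j)"
  have "(\<Sum>j<m'. a 0 j * y j) = (\<Sum>j<m'. a 0 j * s j * h ^ m)"
    by (rule sum.cong) (simp_all add: s mult.assoc)
  with xe have "h ^ m = (\<Sum>j<m'. a 0 j * s j * h ^ m)" by (rule trans)
  also have "\<dots> = c * h ^ m" unfolding c_def by (simp add: sum_distrib_right)
  finally have hc: "h ^ m = c * h ^ m" .
  have ch: "(1 - c) * h ^ m = 0" by (subst left_diff_distrib, subst hc[symmetric]) simp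
  have "f * c = (\<Sum>j<m'. (f * a 0 j) * s j)" unfolding c_def by (simp add: sum_distrib_left mult.assoc)
  also have "\<dots> = 0" using ae by simp
  finally have cf: "c * f = 0" by (simp add: mult.commute)
  have "(h * (1 - c)) ^ m = (1 - c) ^ m0 * ((1 - c) * h ^ m)"
    by (simp add: m0 power_mult_distrib mult.commute mult.left_commute)
  also have "\<dots> = 0" using ch by simp
  finally have "nilpotent (h * (1 - c))" unfolding nilpotent_def by blast
  moreover have "c \<in> Ann f" using cf by (simp add: Ann_def)
  ultimately show "\<exists>g\<in>Ann f. nilpotent (h * (1 - g))" by blast
qed

lemma prime_one: "prime_ideal (P::'a::comm_ring_1 set) \<Longrightarrow> 1 \<notin> P"
  unfolding prime_ideal_def is_ideal_def by (metis UNIV_eq_I mult.right_neutral)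

lemma prime_mul: "prime_ideal (P::'a::comm_ring_1 set) \<Longrightarrow> a \<in> P \<Longrightarrow> r * a \<in> P"
  unfolding prime_ideal_def is_ideal_def by blast

lemma prime_zero: "prime_ideal (P::'a::comm_ring_1 set) \<Longrightarrow> 0 \<in> P"
  unfolding prime_ideal_def is_ideal_def by blast

lemma prime_add: "prime_ideal (P::'a::comm_ring_1 set) \<Longrightarrow> a \<in> P \<Longrightarrow> b \<in> P \<Longrightarrow> a + b \<in> P"
  unfolding prime_ideal_def is_ideal_def by blast

lemma prime_prod: "prime_ideal (P::'a::comm_ring_1 set) \<Longrightarrow> a * b \<in> P \<Longrightarrow> a \<in> P \<or> b \<in> P"
  unfolding prime_ideal_def by blast

lemma prime_pow: "prime_ideal (P::'a::comm_ring_1 set) \<Longrightarrow> x ^ k \<in> P \<Longrightarrow> x \<in> P"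
proof (induction k)
  case 0 then show ?case using prime_one by auto
next
  case (Suc k) then show ?case using prime_prod by auto
qed

lemma prime_nil: "prime_ideal (P::'a::comm_ring_1 set) \<Longrightarrow> nilpotent x \<Longrightarrow> x \<in> P"
  unfolding nilpotent_def
  by (metis prime_pow prime_ideal_def is_ideal_def)

lemma inter_chain_prime:
  fixes D :: "'a::comm_ring_1 set set"
  assumes ne: "D \<noteq> {}" and pr: "\<forall>Q\<in>D. prime_ideal Q"
    and ch: "\<forall>X\<in>D. \<forall>Y\<in>D. X \<subseteq> Y \<or> Y \<subseteq> X"
  shows "prime_ideal (\<Inter>D)"
proof -
  have id: "is_ideal (\<Inter>D)"
    unfolding is_ideal_def
  proof (intro conjI ballI allI)
    show "0 \<in> \<Inter>D" using pr prime_zero by blast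
  next
    fix x y assume "x \<in> \<Inter>D" "y \<in> \<Inter>D"
    then show "x + y \<in> \<Inter>D" using pr prime_add by blast
  next
    fix r x assume "x \<in> \<Inter>D"
    then show "r * x \<in> \<Inter>D" using pr prime_mul by blast
  qed
  obtain Q0 where Q0: "Q0 \<in> D" using ne by blast
  have nu: "\<Inter>D \<noteq> UNIV" using Q0 pr prime_one by blast
  have "a \<in> \<Inter>D \<or> b \<in> \<Inter>D" if ab: "a * b \<in> \<Inter>D" for a b
  proof (rule ccontr)
    assume "\<not> (a \<in> \<Inter>D \<or> b \<in> \<Inter>D)"
    then obtain Q1 Q2 where q: "Q1 \<in> D" "Q2 \<in> D" "a \<notin> Q1" "b \<notin> Q2" by blast
    show False
    proof (cases "Q1 \<subseteq> Q2")
      case True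
      then show False using q ab pr prime_prod[of Q1 a b] by blast
    next
      case False
      then have "Q2 \<subseteq> Q1" using ch q by blast
      then show False using q ab pr prime_prod[of Q2 a b] by blast
    qed
  qed
  then show ?thesis using id nu unfolding prime_ideal_def by blast
qed

lemma exists_minimal:
  fixes P :: "'a::comm_ring_1 set"
  assumes P: "prime_ideal P"
  shows "\<exists>Q. minimal_prime Q \<and> Q \<subseteq> P"
proof -
  let ?A = "uminus ` {Q. prime_ideal Q \<and> Q \<subseteq> P}"
  have "\<exists>M\<in>?A. \<forall>X\<in>?A. M \<subseteq> X \<longrightarrow> X = M"
  proof (rule subset_Zorn_nonempty)
    show "?A \<noteq> {}" using P by blast
  next
    fix C assume Cne: "C \<noteq> {}" and Cch: "subset.chain ?A C"
    define D where "D = uminus ` C"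
    have CA: "C \<subseteq> ?A" and Cc: "\<forall>X\<in>C. \<forall>Y\<in>C. X \<subseteq> Y \<or> Y \<subseteq> X"
      using Cch unfolding subset_chain_def by auto
    have D1: "D \<noteq> {}" using Cne unfolding D_def by blast
    have D2: "\<forall>Q\<in>D. prime_ideal Q \<and> Q \<subseteq> P" using CA unfolding D_def by auto
    have D3: "\<forall>X\<in>D. \<forall>Y\<in>D. X \<subseteq> Y \<or> Y \<subseteq> X" using Cc unfolding D_def by auto
    have pi: "prime_ideal (\<Inter>D)" using inter_chain_prime[OF D1] D2 D3 by blast
    have sub: "\<Inter>D \<subseteq> P" using D1 D2 by blast
    have eq: "\<Union>C = - \<Inter>D" unfolding D_def by auto
    show "\<Union>C \<in> ?A" unfolding eq using pi sub by blast
  qed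
  then obtain Q where Q: "prime_ideal Q" "Q \<subseteq> P"
    and mx: "\<forall>X\<in>?A. - Q \<subseteq> X \<longrightarrow> X = - Q" by blast
  have "minimal_prime Q"
    unfolding minimal_prime_def
  proof (intro conjI allI impI)
    show "prime_ideal Q" by (rule Q(1))
    fix Q' assume "prime_ideal Q' \<and> Q' \<subseteq> Q"
    then have "- Q' \<in> ?A" "- Q \<subseteq> - Q'" using Q by auto
    then have "- Q' = - Q" using mx by blast
    then show "Q' = Q" by simp
  qed
  then show ?thesis using Q by blast
qed

lemma ideal_extend:
  fixes M :: "'a::comm_ring_1 set"
  assumes "is_ideal M"
  shows "is_ideal {m + r * a | m r. m \<in> M}"
proof -
  have c0: "0 \<in> M" and c1: "\<And>u v. u \<in> M \<Longrightarrow> v \<in> M \<Longrightarrow> u + v \<in> M"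
    and c2: "\<And>r u. u \<in> M \<Longrightarrow> r * u \<in> M"
    using assms unfolding is_ideal_def by blast+
  let ?J = "{m + r * a | m r. m \<in> M}"
  have mem: "m + r * a \<in> ?J" if "m \<in> M" for m r using that by blast
  show ?thesis
    unfolding is_ideal_def
  proof (intro conjI ballI allI)
    have "0 + 0 * a \<in> ?J" by (rule mem[OF c0])
    then show "0 \<in> ?J" by simp
  next
    fix x y assume "x \<in> ?J" "y \<in> ?J"
    then obtain m1 r1 m2 r2 where e: "x = m1 + r1 * a" "y = m2 + r2 * a" "m1 \<in> M" "m2 \<in> M" by blast
    have "(m1 + m2) + (r1 + r2) * a \<in> ?J" by (rule mem[OF c1[OF e(3) e(4)]])
    moreover have "x + y = (m1 + m2) + (r1 + r2) * a" using e by (simp add: algebra_simps)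
    ultimately show "x + y \<in> ?J" by simp
  next
    fix r x assume "x \<in> ?J"
    then obtain m1 r1 where e: "x = m1 + r1 * a" "m1 \<in> M" by blast
    have "r * m1 + (r * r1) * a \<in> ?J" by (rule mem[OF c2[OF e(2)]])
    moreover have "r * x = r * m1 + (r * r1) * a" using e by (simp add: algebra_simps)
    ultimately show "r * x \<in> ?J" by simp
  qed
qed

lemma minimal_prime_annih:
  fixes Q :: "'a::comm_ring_1 set"
  assumes Q: "minimal_prime Q" and x: "x \<in> Q"
  shows "\<exists>s k. s \<notin> Q \<and> s * x ^ k = 0"
proof (rule ccontr)
  assume H: "\<not> ?thesis"
  have Qp: "prime_ideal Q" using Q unfolding minimal_prime_def by blast
  define S where "S = {s * x ^ k | s k. s \<notin> Q}"
  have S0: "0 \<notin> S" using H unfolding S_def by auto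
  let ?A = "{I. is_ideal I \<and> I \<inter> S = {}}"
  have "\<exists>M\<in>?A. \<forall>X\<in>?A. M \<subseteq> X \<longrightarrow> X = M"
  proof (rule subset_Zorn_nonempty)
    have "is_ideal {0::'a}" unfolding is_ideal_def by simp
    then have "{0} \<in> ?A" using S0 by blast
    then show "?A \<noteq> {}" by blast
  next
    fix C assume Cne: "C \<noteq> {}" and Cch: "subset.chain ?A C"
    have CA: "C \<subseteq> ?A" and Cc: "\<forall>X\<in>C. \<forall>Y\<in>C. X \<subseteq> Y \<or> Y \<subseteq> X"
      using Cch unfolding subset_chain_def by auto
    have "is_ideal (\<Union>C)"
      unfolding is_ideal_def
    proof (intro conjI ballI allI)
      obtain I where "I \<in> C" using Cne by blast
      then show "0 \<in> \<Union>C" using CA unfolding is_ideal_def by blast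
    next
      fix a b assume "a \<in> \<Union>C" "b \<in> \<Union>C"
      then obtain I J where IJ: "I \<in> C" "J \<in> C" "a \<in> I" "b \<in> J" by blast
      show "a + b \<in> \<Union>C"
      proof (cases "I \<subseteq> J")
        case True
        then show ?thesis using IJ CA unfolding is_ideal_def by blast
      next
        case False
        then have "J \<subseteq> I" using Cc IJ by blast
        then show ?thesis using IJ CA unfolding is_ideal_def by blast
      qed
    next
      fix r a assume "a \<in> \<Union>C"
      then show "r * a \<in> \<Union>C" using CA unfolding is_ideal_def by blast
    qed
    moreover have "\<Union>C \<inter> S = {}" using CA by blast
    ultimately show "\<Union>C \<in> ?A" by blast
  qed
  then obtain M where Mi: "is_ideal M" and MS: "M \<inter> S = {}"
    and mx: "\<forall>X\<in>?A. M \<subseteq> X \<longrightarrow> X = M" by blast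
  have "1 * x ^ 0 \<in> S" unfolding S_def using prime_one[OF Qp] by blast
  then have one: "1 \<in> S" by simp
  have Mext: "{m + r * a | m r. m \<in> M} \<inter> S \<noteq> {}" if a: "a \<notin> M" for a
  proof
    assume dis: "{m + r * a | m r. m \<in> M} \<inter> S = {}"
    have "{m + r * a | m r. m \<in> M} \<in> ?A" using ideal_extend[OF Mi] dis by blast
    moreover have "M \<subseteq> {m + r * a | m r. m \<in> M}"
    proof
      fix y assume "y \<in> M"
      then have "y = y + 0 * a \<and> y \<in> M" by simp
      then show "y \<in> {m + r * a | m r. m \<in> M}" by blast
    qed
    ultimately have "{m + r * a | m r. m \<in> M} = M" using mx by blast
    moreover have "a \<in> {m + r * a | m r. m \<in> M}"
    proof -
      have "0 \<in> M" using Mi unfolding is_ideal_def by blast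
      then have "a = 0 + 1 * a \<and> 0 \<in> M" by simp
      then show ?thesis by blast
    qed
    ultimately show False using a by blast
  qed
  have Mp: "prime_ideal M"
    unfolding prime_ideal_def
  proof (intro conjI allI impI)
    show "is_ideal M" by (rule Mi)
    show "M \<noteq> UNIV" using one MS by blast
    fix a b assume ab: "a * b \<in> M"
    show "a \<in> M \<or> b \<in> M"
    proof (rule ccontr)
      assume "\<not> (a \<in> M \<or> b \<in> M)"
      then have "a \<notin> M" "b \<notin> M" by simp_all
      from Mext[OF this(1)] obtain m1 r1 s1 k1 where
        e1: "m1 + r1 * a = s1 * x ^ k1" "m1 \<in> M" "s1 \<notin> Q" unfolding S_def by blast
      from Mext[OF \<open>b \<notin> M\<close>] obtain m2 r2 s2 k2 where
        e2: "m2 + r2 * b = s2 * x ^ k2" "m2 \<in> M" "s2 \<notin> Q" unfolding S_def by blast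
      have "s1 * s2 \<notin> Q" using e1 e2 prime_prod[OF Qp] by blast
      hence inS: "(s1 * s2) * x ^ (k1 + k2) \<in> S" unfolding S_def by blast
      have "(s1 * s2) * x ^ (k1 + k2) = (m1 + r1 * a) * (m2 + r2 * b)"
        using e1 e2 by (simp add: power_add algebra_simps)
      also have "\<dots> = (m1 * (m2 + r2 * b) + (r1 * m2) * a) + (r1 * r2) * (a * b)"
        by (simp add: algebra_simps)
      also have "\<dots> \<in> M"
      proof -
        have c1: "\<And>u v. u \<in> M \<Longrightarrow> v \<in> M \<Longrightarrow> u + v \<in> M" and c2: "\<And>r u. u \<in> M \<Longrightarrow> r * u \<in> M"
          using Mi unfolding is_ideal_def by blast+
        have "(m2 + r2 * b) * m1 \<in> M" using c2 e1(2) .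
        then have t1: "m1 * (m2 + r2 * b) \<in> M" by (simp add: mult.commute)
        have "(r1 * a) * m2 \<in> M" using c2 e2(2) .
        then have t2: "(r1 * m2) * a \<in> M" by (simp add: ac_simps)
        have t3: "(r1 * r2) * (a * b) \<in> M" using c2 ab .
        show ?thesis using c1[OF c1[OF t1 t2] t3] .
      qed
      finally show False using inS MS by blast
    qed
  qed
  have "M \<subseteq> Q"
  proof
    fix y assume "y \<in> M"
    show "y \<in> Q"
    proof (rule ccontr)
      assume "y \<notin> Q"
      then have "y * x ^ 0 \<in> S" unfolding S_def by blast
      then show False using \<open>y \<in> M\<close> MS by auto
    qed
  qed
  then have "M = Q" using Q Mp unfolding minimal_prime_def by blast
  moreover have "1 * x ^ 1 \<in> S" unfolding S_def using prime_one[OF Qp] by blast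
  then have "x \<in> S" by simp
  ultimately show False using x MS by blast
qed

lemma part2:
  assumes qp: "quasi_pf_ring TYPE('a::comm_ring_1)"
  shows "mp_ring TYPE('a)"
  unfolding mp_ring_def
proof (intro allI impI)
  fix P :: "'a set" assume P: "prime_ideal P"
  have sub: "Q1 \<subseteq> Q2" if q1: "minimal_prime Q1" "Q1 \<subseteq> P" and q2: "minimal_prime Q2" "Q2 \<subseteq> P"
    for Q1 Q2
  proof
    fix x assume x1: "x \<in> Q1"
    show "x \<in> Q2"
    proof (rule ccontr)
      assume x2: "x \<notin> Q2"
      have p1: "prime_ideal Q1" and p2: "prime_ideal Q2"
        using q1 q2 unfolding minimal_prime_def by auto
      obtain s k where s: "s \<notin> Q1" "s * x ^ k = 0" using minimal_prime_annih[OF q1(1) x1] by blast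
      have "quasi_pure (Ann (x ^ k))" using qp unfolding quasi_pf_ring_def by blast
      moreover have "s \<in> Ann (x ^ k)" using s unfolding Ann_def by simp
      ultimately obtain g where g: "g * x ^ k = 0" "nilpotent (s * (1 - g))"
        unfolding quasi_pure_def Ann_def by blast
      have "g * x ^ k \<in> Q2" using g p2 unfolding prime_ideal_def is_ideal_def by simp
      then have "g \<in> Q2" using prime_prod[OF p2] prime_pow[OF p2] x2 by blast
      then have gP: "g \<in> P" using q2 by blast
      have "s * (1 - g) \<in> Q1" using prime_nil[OF p1 g(2)] .
      then have "1 - g \<in> Q1" using prime_prod[OF p1] s by blast
      then have "1 - g \<in> P" using q1 by blast
      then have "g + (1 - g) \<in> P" using prime_add[OF P gP] by blast
      then show False using prime_one[OF P] by simp
    qed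
  qed
  show "\<exists>!Q. minimal_prime Q \<and> Q \<subseteq> P"
  proof (rule ex_ex1I)
    show "\<exists>Q. minimal_prime Q \<and> Q \<subseteq> P" using exists_minimal[OF P] .
  next
    fix Q1 Q2 assume "minimal_prime Q1 \<and> Q1 \<subseteq> P" "minimal_prime Q2 \<and> Q2 \<subseteq> P"
    then show "Q1 = Q2" using sub by blast
  qed
qed

theorem theorem4p2:
  "(GPF_ring TYPE('a::comm_ring_1) \<longrightarrow> quasi_pf_ring TYPE('a)) \<and>
   (quasi_pf_ring TYPE('a) \<longrightarrow> mp_ring TYPE('a))"
  using part1 part2 by blast

end
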